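(* For every $\omega$-type $\tau$, the set $\mathbb P_\tau$ is a Borel subset of $\mathcal P(\omega^2)$ and is dense in $\mathbb P$: for every $A\in\mathbb P$ there is $B\subseteq A$ with $B\in\mathbb P_\tau$. Consequently $\mathbb P$ is partitioned into continuum many dense Borel pieces $\mathbb P_\tau$.
   Context: $\mathcal P(\omega^2)$ is identified with $2^{\omega^2}$ with the product topology. $\mathbb P$ is the set of all $A\subseteq\omega^2$ such that: (1) $A$ has infinitely many infinite sections and no nonempty finite sections, where $A(x)=\{y:\langle x,y\rangle\in A\}$; (2) sections pairwise disjoint; (3) every $\langle x,y\rangle\in A$ has $x<y$; (4) for $\langle x,y\rangle,\langle x',y'\rangle\in A$, $x\neq y'$. An $\omega$-type is a linear pre-order of formal symbols $x_1,x_2,\dots,y_1,y_2,\dots$ such that $y_1<y_2<\dots$, each $x_i$ precedes $y_i$, each equivalence class is either a single $y_i$ or infinitely many $x_i$'s, there are infinitely many equivalence classes of $x$'s, and the induced order of equivalence classes has order type $\omega$. An element $A\in\mathbb P$, listed as $\{\langle a_i,b_i\rangle:i\ge1\}$ with $b_1<b_2<\cdots$, realizes the $\omega$-type consisting of exactly those inequalities among the symbols that hold when $x_i$ is interpreted as $a_i$ and $y_j$ as $b_j$ (each $A\in\mathbb P$ realizes a unique $\omega$-type). $\mathbb P_\tau$ is the set of elements of $\mathbb P$ realizing $\tau$. *)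

theory Defs
  imports "HOL-Analysis.Analysis" "HOL-Library.Infinite_Set" "HOL-Library.Equipollence"
begin

text \<open>Subsets of omega^2 are sets of pairs of naturals; P(omega^2) is identified
with the product space 2^(omega^2), i.e. the type (nat \<times> nat) \<Rightarrow> bool with the
product topology (bool carries the discrete topology), via characteristic functions.\<close>

definition char_fun :: "(nat \<times> nat) set \<Rightarrow> (nat \<times> nat \<Rightarrow> bool)" where
  "char_fun A = (\<lambda>p. p \<in> A)"

definition is_Borel_family :: "(nat \<times> nat) set set \<Rightarrow> bool" where
  "is_Borel_family F \<longleftrightarrow> char_fun ` F \<in> sets (borel :: (nat \<times> nat \<Rightarrow> bool) measure)"

definition sec :: "(nat \<times> nat) set \<Rightarrow> nat \<Rightarrow> nat set" where
  "sec A x = {y. (x, y) \<in> A}"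

definition in_PP :: "(nat \<times> nat) set \<Rightarrow> bool" where
  "in_PP A \<longleftrightarrow>
     infinite {x. infinite (sec A x)} \<and>
     (\<forall>x. sec A x \<noteq> {} \<longrightarrow> infinite (sec A x)) \<and>
     (\<forall>x x'. x \<noteq> x' \<longrightarrow> sec A x \<inter> sec A x' = {}) \<and>
     (\<forall>x y. (x, y) \<in> A \<longrightarrow> x < y) \<and>
     (\<forall>x y x' y'. (x, y) \<in> A \<longrightarrow> (x', y') \<in> A \<longrightarrow> x \<noteq> y')"

definition PP :: "(nat \<times> nat) set set" where
  "PP = {A. in_PP A}"

text \<open>Formal symbols x_i, y_i (indexed from 0 instead of 1).\<close>
datatype sym = X nat | Y nat

text \<open>An omega-type is a linear pre-order (given by its \<le> relation) on the symbols.\<close>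
definition sym_lt :: "(sym \<Rightarrow> sym \<Rightarrow> bool) \<Rightarrow> sym \<Rightarrow> sym \<Rightarrow> bool" where
  "sym_lt \<tau> s t \<longleftrightarrow> \<tau> s t \<and> \<not> \<tau> t s"

definition sym_cls :: "(sym \<Rightarrow> sym \<Rightarrow> bool) \<Rightarrow> sym \<Rightarrow> sym set" where
  "sym_cls \<tau> s = {t. \<tau> s t \<and> \<tau> t s}"

definition omega_type :: "(sym \<Rightarrow> sym \<Rightarrow> bool) \<Rightarrow> bool" where
  "omega_type \<tau> \<longleftrightarrow>
     (\<forall>s. \<tau> s s) \<and> (\<forall>s t u. \<tau> s t \<longrightarrow> \<tau> t u \<longrightarrow> \<tau> s u) \<and> (\<forall>s t. \<tau> s t \<or> \<tau> t s) \<and>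
     (\<forall>i j. i < j \<longrightarrow> sym_lt \<tau> (Y i) (Y j)) \<and>
     (\<forall>i. sym_lt \<tau> (X i) (Y i)) \<and>
     (\<forall>s. (\<exists>i. sym_cls \<tau> s = {Y i}) \<or>
          (infinite (sym_cls \<tau> s) \<and> (\<forall>t\<in>sym_cls \<tau> s. \<exists>i. t = X i))) \<and>
     infinite {sym_cls \<tau> (X i) | i. True} \<and>
     (\<forall>s. finite {sym_cls \<tau> t | t. sym_lt \<tau> t s})"

text \<open>Listing A as pairs (a_i, b_i) with b_0 < b_1 < ...\<close>
definition bseq :: "(nat \<times> nat) set \<Rightarrow> nat \<Rightarrow> nat" where
  "bseq A i = enumerate (snd ` A) i"

definition aseq :: "(nat \<times> nat) set \<Rightarrow> nat \<Rightarrow> nat" where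
  "aseq A i = (THE x. (x, bseq A i) \<in> A)"

fun sym_val :: "(nat \<times> nat) set \<Rightarrow> sym \<Rightarrow> nat" where
  "sym_val A (X i) = aseq A i"
| "sym_val A (Y j) = bseq A j"

definition realizes :: "(nat \<times> nat) set \<Rightarrow> (sym \<Rightarrow> sym \<Rightarrow> bool) \<Rightarrow> bool" where
  "realizes A \<tau> \<longleftrightarrow> (\<forall>s t. \<tau> s t \<longleftrightarrow> sym_val A s \<le> sym_val A t)"

definition PP_type :: "(sym \<Rightarrow> sym \<Rightarrow> bool) \<Rightarrow> (nat \<times> nat) set set" where
  "PP_type \<tau> = {A \<in> PP. realizes A \<tau>}"

end

theory Submission
  imports Defs
begin


fun vl :: "(nat\<Rightarrow>nat) \<Rightarrow> (nat\<Rightarrow>nat) \<Rightarrow> sym \<Rightarrow> nat" where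
  "vl a b (X i) = a i" | "vl a b (Y j) = b j"

definition good :: "(nat\<Rightarrow>nat) \<Rightarrow> (nat\<Rightarrow>nat) \<Rightarrow> bool" where
  "good a b \<longleftrightarrow> strict_mono b \<and> (\<forall>i. a i < b i) \<and> (\<forall>i j. a i \<noteq> b j) \<and>
     (\<forall>i. infinite {k. a k = a i}) \<and> infinite (range a)"

definition pairsOf :: "(nat\<Rightarrow>nat) \<Rightarrow> (nat\<Rightarrow>nat) \<Rightarrow> (nat\<times>nat) set" where
  "pairsOf a b = range (\<lambda>i. (a i, b i))"

lemma smono_range_eq:
  fixes f g :: "nat \<Rightarrow> nat"
  assumes f: "strict_mono f" and g: "strict_mono g" and r: "range f = range g"
  shows "f = g"
proof
  fix n show "f n = g n"
  proof (induction n rule: less_induct)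
    case (less n)
    obtain m where m: "f n = g m" using r by (metis rangeI image_iff)
    obtain k where k: "g n = f k" using r by (metis rangeI image_iff)
    have "\<not> m < n"
    proof
      assume "m < n" then have "g m = f m" using less by simp
      then have "f n = f m" using m by simp
      then show False using \<open>m < n\<close> f by (metis strict_mono_eq nat_neq_iff)
    qed
    then have "g n \<le> g m" using g by (simp add: strict_mono_less_eq)
    moreover have "\<not> k < n"
    proof
      assume "k < n" then have "f k = g k" using less by simp
      then have "g n = g k" using k by simp
      then show False using \<open>k < n\<close> g by (metis strict_mono_eq nat_neq_iff)
    qed
    then have "f n \<le> f k" using f by (simp add: strict_mono_less_eq)
    ultimately show ?case using m k by simp
  qed
qed

lemma enum_range:
  fixes b :: "nat \<Rightarrow> nat"
  assumes "strict_mono b" shows "enumerate (range b) = b"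
proof -
  have inf: "infinite (range b)"
    using assms strict_mono_imp_inj_on finite_imageD infinite_UNIV_nat by blast
  have "strict_mono (enumerate (range b))"
    using inf by (simp add: strict_mono_def enumerate_mono)
  moreover have "range (enumerate (range b)) = range b"
    using bij_enumerate[OF inf] by (simp add: bij_betw_def)
  ultimately show ?thesis using smono_range_eq assms by blast
qed

lemma G1:
  assumes gd: "good a b"
  shows "in_PP (pairsOf a b) \<and> bseq (pairsOf a b) = b \<and> aseq (pairsOf a b) = a"
proof -
  let ?A = "pairsOf a b"
  have sm: "strict_mono b" and lt: "\<And>i. a i < b i" and ne: "\<And>i j. a i \<noteq> b j"
    and ia: "\<And>i. infinite {k. a k = a i}" and ir: "infinite (range a)"
    using gd by (auto simp: good_def)
  have injb: "inj b" using sm strict_mono_imp_inj_on by blast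
  have sec: "\<And>x. sec ?A x = b ` {i. a i = x}"
    by (auto simp: sec_def pairsOf_def)
  have secinf: "\<And>i. infinite (sec ?A (a i))"
    using sec ia injb by (metis finite_imageD inj_on_subset subset_UNIV)
  have s1: "{x. infinite (sec ?A x)} = range a"
  proof
    show "{x. infinite (sec ?A x)} \<subseteq> range a"
    proof
      fix x assume "x \<in> {x. infinite (sec ?A x)}"
      then have "{i. a i = x} \<noteq> {}" using sec by force
      then show "x \<in> range a" by auto
    qed
  qed (use secinf in auto)
  have bs: "bseq ?A = b"
  proof -
    have "snd ` ?A = range b" by (auto simp: pairsOf_def image_image)
    then show ?thesis using enum_range[OF sm] by (simp add: bseq_def fun_eq_iff)
  qed
  have as: "aseq ?A = a"
  proof
    fix i
    have "(THE x. (x, b i) \<in> ?A) = a i"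
    proof (rule the_equality)
      show "(a i, b i) \<in> ?A" by (auto simp: pairsOf_def)
      fix x assume "(x, b i) \<in> ?A"
      then obtain k where "x = a k" "b i = b k" by (auto simp: pairsOf_def)
      then show "x = a i" using injb by (metis injD)
    qed
    then show "aseq ?A i = a i" using bs by (simp add: aseq_def)
  qed
  have "in_PP ?A"
    unfolding in_PP_def
  proof (intro conjI allI impI)
    show "infinite {x. infinite (sec ?A x)}" using s1 ir by simp
  next
    fix x assume "sec ?A x \<noteq> {}"
    then obtain i where "a i = x" using sec by auto
    then show "infinite (sec ?A x)" using secinf by blast
  next
    fix x x' :: nat assume "x \<noteq> x'"
    then show "sec ?A x \<inter> sec ?A x' = {}" using sec injb by (auto dest: injD)
  next
    fix x y assume "(x, y) \<in> ?A" then show "x < y" using lt by (auto simp: pairsOf_def)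
  next
    fix x y x' y' assume "(x, y) \<in> ?A" "(x', y') \<in> ?A"
    then show "x \<noteq> y'" using ne by (auto simp: pairsOf_def)
  qed
  then show ?thesis using bs as by simp
qed




lemma sym_val_vl: "sym_val A s = vl (aseq A) (bseq A) s"
  by (cases s) auto

lemma G2:
  assumes P: "in_PP A"
  shows "good (aseq A) (bseq A) \<and> A = pairsOf (aseq A) (bseq A)"
proof -
  note Pd = P[unfolded in_PP_def]
  have i1: "infinite {x. infinite (sec A x)}" using Pd by (rule conjunct1)
  have i2: "\<And>x. sec A x \<noteq> {} \<Longrightarrow> infinite (sec A x)"
    using Pd[THEN conjunct2, THEN conjunct1] by blast
  have i3: "\<And>x x'. x \<noteq> x' \<Longrightarrow> sec A x \<inter> sec A x' = {}"
    using Pd[THEN conjunct2, THEN conjunct2, THEN conjunct1] by blast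
  have i4: "\<And>x y. (x, y) \<in> A \<Longrightarrow> x < y"
    using Pd[THEN conjunct2, THEN conjunct2, THEN conjunct2, THEN conjunct1] by blast
  have i5: "\<And>x y x' y'. (x, y) \<in> A \<Longrightarrow> (x', y') \<in> A \<Longrightarrow> x \<noteq> y'"
    using Pd[THEN conjunct2, THEN conjunct2, THEN conjunct2, THEN conjunct2] by blast
  have uniq: "\<And>x x' y. (x, y) \<in> A \<Longrightarrow> (x', y) \<in> A \<Longrightarrow> x = x'"
  proof (rule ccontr)
    fix x x' y assume 1: "(x, y) \<in> A" "(x', y) \<in> A" "x \<noteq> x'"
    then have "sec A x \<inter> sec A x' = {}" using i3 by blast
    moreover have "y \<in> sec A x \<inter> sec A x'" using 1 by (simp add: sec_def)
    ultimately show False by blast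
  qed
  let ?S = "snd ` A"
  obtain x0 where "infinite (sec A x0)" using i1 not_finite_existsD by blast
  moreover have "sec A x0 \<subseteq> ?S" by (force simp: sec_def)
  ultimately have infS: "infinite ?S" using finite_subset by blast
  define b where "b = bseq A"
  define a where "a = aseq A"
  have sm: "strict_mono b" unfolding b_def bseq_def strict_mono_def
    using infS enumerate_mono by blast
  have bS: "\<And>i. b i \<in> ?S" unfolding b_def bseq_def using infS enumerate_in_set by blast
  have rb: "range b = ?S" unfolding b_def bseq_def using bij_enumerate[OF infS]
    by (simp add: bij_betw_def)
  have abA: "\<And>i. (a i, b i) \<in> A"
  proof -
    fix i
    obtain x where x: "(x, b i) \<in> A" using bS[of i] by force
    have "(THE x. (x, b i) \<in> A) = x"
      by (rule the_equality) (use x uniq in \<open>blast+\<close>)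
    then show "(a i, b i) \<in> A" using x by (simp add: a_def aseq_def b_def)
  qed
  have Aeq: "A = pairsOf a b"
  proof
    show "pairsOf a b \<subseteq> A" using abA by (auto simp: pairsOf_def)
    show "A \<subseteq> pairsOf a b"
    proof
      fix p assume p: "p \<in> A"
      obtain x y where xy: "p = (x, y)" by (cases p)
      then have "y \<in> snd ` A" using p by (metis image_eqI snd_conv)
      then have "y \<in> range b" using rb by simp
      then obtain i where "y = b i" by auto
      then have "x = a i" using abA[of i] p xy uniq by blast
      then show "p \<in> pairsOf a b" using xy \<open>y = b i\<close> by (auto simp: pairsOf_def)
    qed
  qed
  have injb: "inj b" using sm strict_mono_imp_inj_on by blast
  have secA: "\<And>x. sec A x = b ` {i. a i = x}"
  proof -
    fix x
    have "sec A x = {y. (x, y) \<in> pairsOf a b}" using Aeq by (simp add: sec_def)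
    also have "\<dots> = b ` {i. a i = x}" by (auto simp: pairsOf_def)
    finally show "sec A x = b ` {i. a i = x}" .
  qed
  have "good a b"
    unfolding good_def
  proof (intro conjI allI)
    show "strict_mono b" by fact
    fix i
    show "a i < b i" using i4[OF abA[of i]] .
  next
    fix i j show "a i \<noteq> b j" using i5[OF abA[of i] abA[of j]] .
  next
    fix i
    have "sec A (a i) \<noteq> {}" using abA[of i] unfolding sec_def by blast
    then have "infinite (sec A (a i))" by (rule i2)
    then have "infinite (b ` {k. a k = a i})" using secA by simp
    then show "infinite {k. a k = a i}" using finite_imageI by blast
  next
    have "{x. infinite (sec A x)} \<subseteq> range a"
    proof
      fix x assume "x \<in> {x. infinite (sec A x)}"
      then have "{i. a i = x} \<noteq> {}" using secA by force
      then show "x \<in> range a" by auto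
    qed
    then show "infinite (range a)" using i1 finite_subset by blast
  qed
  then have g: "good (aseq A) (bseq A)" unfolding a_def b_def .
  have "A = pairsOf (aseq A) (bseq A)" using Aeq unfolding a_def b_def .
  with g show ?thesis by (rule conjI)
qed

lemma G3:
  assumes gd: "good a b"
  shows "omega_type (\<lambda>s t. vl a b s \<le> vl a b t)"
proof -
  let ?t = "\<lambda>s t. vl a b s \<le> vl a b t"
  have sm: "strict_mono b" and lt: "\<And>i. a i < b i" and ne: "\<And>i j. a i \<noteq> b j"
    and ia: "\<And>i. infinite {k. a k = a i}" and ir: "infinite (range a)"
    using gd by (auto simp: good_def)
  have injb: "inj b" using sm strict_mono_imp_inj_on by blast
  have cls: "\<And>s. sym_cls ?t s = {t. vl a b t = vl a b s}"
    by (auto simp: sym_cls_def)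
  have clsY: "\<And>j. sym_cls ?t (Y j) = {Y j}"
  proof -
    fix j
    have "\<And>t. vl a b t = b j \<longleftrightarrow> t = Y j"
    proof -
      fix t show "vl a b t = b j \<longleftrightarrow> t = Y j"
      proof (cases t)
        case (X k) then show ?thesis using ne[of k j] by auto
      next
        case (Y k) then show ?thesis using injb by (auto dest: injD)
      qed
    qed
    then show "sym_cls ?t (Y j) = {Y j}" using cls by auto
  qed
  have clsX: "\<And>i. sym_cls ?t (X i) = X ` {k. a k = a i}"
  proof -
    fix i
    have "\<And>t. vl a b t = a i \<longleftrightarrow> t \<in> X ` {k. a k = a i}"
    proof -
      fix t show "vl a b t = a i \<longleftrightarrow> t \<in> X ` {k. a k = a i}"
      proof (cases t)
        case (X k) then show ?thesis by auto
      next
        case (Y j) then show ?thesis using ne[of i j] by auto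
      qed
    qed
    then show "sym_cls ?t (X i) = X ` {k. a k = a i}" using cls by auto
  qed
  have injX: "inj X" by (auto intro: injI)
  show ?thesis
    unfolding omega_type_def
  proof (intro conjI allI impI)
    show "\<And>s. ?t s s" by simp
    show "\<And>s t u. ?t s t \<Longrightarrow> ?t t u \<Longrightarrow> ?t s u" by simp
    show "\<And>s t. ?t s t \<or> ?t t s" by auto
    show "\<And>i j. i < j \<Longrightarrow> sym_lt ?t (Y i) (Y j)"
    proof -
      fix i j :: nat assume "i < j" then have "b i < b j" using sm strict_monoD by blast
      then show "sym_lt ?t (Y i) (Y j)" by (simp add: sym_lt_def)
    qed
    show "\<And>i. sym_lt ?t (X i) (Y i)"
    proof -
      fix i have "a i < b i" using lt by blast
      then show "sym_lt ?t (X i) (Y i)" by (simp add: sym_lt_def)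
    qed
  next
    fix s
    show "(\<exists>i. sym_cls ?t s = {Y i}) \<or>
          (infinite (sym_cls ?t s) \<and> (\<forall>t\<in>sym_cls ?t s. \<exists>i. t = X i))"
    proof (cases s)
      case (X i)
      have "infinite (X ` {k. a k = a i})"
        using ia[of i] injX by (metis finite_imageD inj_on_subset subset_UNIV)
      then show ?thesis using X clsX by auto
    next
      case (Y j) then show ?thesis using clsY by auto
    qed
  next
    have eq: "{sym_cls ?t (X i) | i. True} = (\<lambda>v. X ` {k. a k = v}) ` range a"
    proof -
      have "{sym_cls ?t (X i) | i. True} = range (\<lambda>i. sym_cls ?t (X i))" by blast
      also have "\<dots> = (\<lambda>v. X ` {k. a k = v}) ` range a" by (simp add: clsX image_image)
      finally show ?thesis .
    qed
    have inj: "inj_on (\<lambda>v. X ` {k. a k = v}) (range a)"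
    proof (rule inj_onI)
      fix u v assume "u \<in> range a" "v \<in> range a" and e: "X ` {k. a k = u} = X ` {k. a k = v}"
      then obtain i where "a i = u" by auto
      then have "X i \<in> X ` {k. a k = v}" using e by auto
      then show "u = v" using \<open>a i = u\<close> by auto
    qed
    show "infinite {sym_cls ?t (X i) | i. True}"
    proof
      assume "finite {sym_cls ?t (X i) | i. True}"
      then have "finite ((\<lambda>v. X ` {k. a k = v}) ` range a)" by (simp only: eq)
      then have "finite (range a)" using finite_imageD inj by blast
      then show False using ir by simp
    qed
  next
    fix s
    have "{sym_cls ?t t | t. sym_lt ?t t s} \<subseteq> (\<lambda>v. {t. vl a b t = v}) ` {..<vl a b s}"
    proof (rule subsetI)
      fix C assume "C \<in> {sym_cls ?t t | t. sym_lt ?t t s}"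
      then obtain t where C: "C = sym_cls ?t t" and l: "sym_lt ?t t s" by blast
      from l have "vl a b t < vl a b s" by (simp add: sym_lt_def)
      moreover have "C = {u. vl a b u = vl a b t}" using C cls by simp
      ultimately show "C \<in> (\<lambda>v. {t. vl a b t = v}) ` {..<vl a b s}" by blast
    qed
    then show "finite {sym_cls ?t t | t. sym_lt ?t t s}"
      using finite_subset by blast
  qed
qed

lemma type_exists:
  assumes "in_PP A"
  shows "omega_type (\<lambda>s t. sym_val A s \<le> sym_val A t) \<and> realizes A (\<lambda>s t. sym_val A s \<le> sym_val A t)"
proof
  have "good (aseq A) (bseq A)" using G2[OF assms] by (rule conjunct1)
  then have "omega_type (\<lambda>s t. vl (aseq A) (bseq A) s \<le> vl (aseq A) (bseq A) t)" by (rule G3)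
  then show "omega_type (\<lambda>s t. sym_val A s \<le> sym_val A t)" by (simp only: sym_val_vl)
  show "realizes A (\<lambda>s t. sym_val A s \<le> sym_val A t)" by (simp add: realizes_def)
qed

lemma realizes_unique: "realizes A \<tau> \<Longrightarrow> \<tau> = (\<lambda>s t. sym_val A s \<le> sym_val A t)"
  unfolding realizes_def by (intro ext) simp

lemma part2: "\<forall>A\<in>PP. \<exists>!\<tau>. omega_type \<tau> \<and> A \<in> PP_type \<tau>"
proof
  fix A assume "A \<in> PP"
  then have P: "in_PP A" by (simp add: PP_def)
  show "\<exists>!\<tau>. omega_type \<tau> \<and> A \<in> PP_type \<tau>"
  proof (rule ex1I[of _ "\<lambda>s t. sym_val A s \<le> sym_val A t"])
    show "omega_type (\<lambda>s t. sym_val A s \<le> sym_val A t) \<and> A \<in> PP_type (\<lambda>s t. sym_val A s \<le> sym_val A t)"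
      using type_exists[OF P] \<open>A \<in> PP\<close> by (simp add: PP_type_def)
    fix \<tau> assume "omega_type \<tau> \<and> A \<in> PP_type \<tau>"
    then have "realizes A \<tau>" by (simp add: PP_type_def)
    then show "\<tau> = (\<lambda>s t. sym_val A s \<le> sym_val A t)" by (rule realizes_unique)
  qed
qed




definition rk :: "(sym \<Rightarrow> sym \<Rightarrow> bool) \<Rightarrow> sym \<Rightarrow> nat" where
  "rk \<tau> s = card {sym_cls \<tau> t | t. sym_lt \<tau> t s}"

lemma rk_le:
  assumes om: "omega_type \<tau>"
  shows "\<tau> s t \<longleftrightarrow> rk \<tau> s \<le> rk \<tau> t"
proof -
  note O = om[unfolded omega_type_def]
  have refl: "\<And>s. \<tau> s s" using O[THEN conjunct1] by blast
  have tr: "\<And>s t u. \<tau> s t \<Longrightarrow> \<tau> t u \<Longrightarrow> \<tau> s u" using O[THEN conjunct2, THEN conjunct1] by blast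
  have tot: "\<And>s t. \<tau> s t \<or> \<tau> t s" using O[THEN conjunct2, THEN conjunct2, THEN conjunct1] by blast
  have fin: "\<And>s. finite {sym_cls \<tau> t | t. sym_lt \<tau> t s}" using O[THEN conjunct2, THEN conjunct2, THEN conjunct2, THEN conjunct2, THEN conjunct2, THEN conjunct2, THEN conjunct2] by blast
  define B where "B s = {sym_cls \<tau> t | t. sym_lt \<tau> t s}" for s
  have finB: "\<And>s. finite (B s)" using fin by (simp add: B_def)
  have sub: "\<And>s t. \<tau> s t \<Longrightarrow> B s \<subseteq> B t"
  proof
    fix s t C assume st: "\<tau> s t" and "C \<in> B s"
    then obtain u where C: "C = sym_cls \<tau> u" and us: "sym_lt \<tau> u s" by (auto simp: B_def)
    have "sym_lt \<tau> u t"
      using us st tr unfolding sym_lt_def by blast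
    then show "C \<in> B t" using C by (auto simp: B_def)
  qed
  show ?thesis
  proof
    assume "\<tau> s t" then show "rk \<tau> s \<le> rk \<tau> t"
      using sub finB card_mono unfolding rk_def B_def[symmetric] by metis
  next
    assume le: "rk \<tau> s \<le> rk \<tau> t"
    show "\<tau> s t"
    proof (rule ccontr)
      assume n: "\<not> \<tau> s t"
      then have ts: "\<tau> t s" using tot by blast
      then have lt: "sym_lt \<tau> t s" using n by (simp add: sym_lt_def)
      have "B t \<subseteq> B s" using sub ts by blast
      moreover have "sym_cls \<tau> t \<in> B s" using lt by (auto simp: B_def)
      moreover have "sym_cls \<tau> t \<notin> B t"
      proof
        assume "sym_cls \<tau> t \<in> B t"
        then obtain u where e: "sym_cls \<tau> t = sym_cls \<tau> u" and ut: "sym_lt \<tau> u t"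
          by (auto simp: B_def)
        have "t \<in> sym_cls \<tau> t" using refl by (simp add: sym_cls_def)
        then have "t \<in> sym_cls \<tau> u" using e by simp
        then have "\<tau> t u" by (simp add: sym_cls_def)
        then show False using ut by (simp add: sym_lt_def)
      qed
      ultimately have "B t \<subset> B s" by blast
      then have "card (B t) < card (B s)" using finB psubset_card_mono by blast
      then show False using le unfolding rk_def B_def by simp
    qed
  qed
qed

lemma rk_lt:
  assumes om: "omega_type \<tau>"
  shows "sym_lt \<tau> s t \<longleftrightarrow> rk \<tau> s < rk \<tau> t"
  using rk_le[OF om, of s t] rk_le[OF om, of t s] by (auto simp: sym_lt_def)

lemma omega_facts:
  assumes om: "omega_type \<tau>"
  shows "\<And>i j. i < j \<Longrightarrow> rk \<tau> (Y i) < rk \<tau> (Y j)"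
    and "\<And>i. rk \<tau> (X i) < rk \<tau> (Y i)"
    and "\<And>i j. rk \<tau> (X i) \<noteq> rk \<tau> (Y j)"
    and "\<And>i. infinite {k. rk \<tau> (X k) = rk \<tau> (X i)}"
    and "infinite (range (\<lambda>i. rk \<tau> (X i)))"
proof -
  note O = om[unfolded omega_type_def]
  have yy: "\<And>i j. i < j \<Longrightarrow> sym_lt \<tau> (Y i) (Y j)" using O[THEN conjunct2, THEN conjunct2, THEN conjunct2, THEN conjunct1] by blast
  have xy: "\<And>i. sym_lt \<tau> (X i) (Y i)" using O[THEN conjunct2, THEN conjunct2, THEN conjunct2, THEN conjunct2, THEN conjunct1] by blast
  have cl: "\<And>s. (\<exists>i. sym_cls \<tau> s = {Y i}) \<or>
          (infinite (sym_cls \<tau> s) \<and> (\<forall>t\<in>sym_cls \<tau> s. \<exists>i. t = X i))"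
    using O[THEN conjunct2, THEN conjunct2, THEN conjunct2, THEN conjunct2, THEN conjunct2, THEN conjunct1] by blast
  have infc: "infinite {sym_cls \<tau> (X i) | i. True}" using O[THEN conjunct2, THEN conjunct2, THEN conjunct2, THEN conjunct2, THEN conjunct2, THEN conjunct2, THEN conjunct1] .
  have refl: "\<And>s. \<tau> s s" using O[THEN conjunct1] by blast
  have tr: "\<And>s t u. \<tau> s t \<Longrightarrow> \<tau> t u \<Longrightarrow> \<tau> s u" using O[THEN conjunct2, THEN conjunct1] by blast
  have eqv: "\<And>s t. rk \<tau> s = rk \<tau> t \<longleftrightarrow> \<tau> s t \<and> \<tau> t s"
  proof -
    fix s t show "rk \<tau> s = rk \<tau> t \<longleftrightarrow> \<tau> s t \<and> \<tau> t s"
      using rk_le[OF om, of s t] rk_le[OF om, of t s] by linarith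
  qed
  show "\<And>i j. i < j \<Longrightarrow> rk \<tau> (Y i) < rk \<tau> (Y j)"
  proof -
    fix i j :: nat assume "i < j" then have "sym_lt \<tau> (Y i) (Y j)" by (rule yy)
    then show "rk \<tau> (Y i) < rk \<tau> (Y j)" using rk_lt[OF om, of "Y i" "Y j"] by simp
  qed
  show "\<And>i. rk \<tau> (X i) < rk \<tau> (Y i)"
  proof -
    fix i have "sym_lt \<tau> (X i) (Y i)" by (rule xy)
    then show "rk \<tau> (X i) < rk \<tau> (Y i)" using rk_lt[OF om, of "X i" "Y i"] by simp
  qed
  have clY: "\<And>j. sym_cls \<tau> (Y j) = {Y j}"
  proof -
    fix j
    have mem: "Y j \<in> sym_cls \<tau> (Y j)" using refl by (simp add: sym_cls_def)
    show "sym_cls \<tau> (Y j) = {Y j}"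
    proof (cases "\<exists>i. sym_cls \<tau> (Y j) = {Y i}")
      case True
      then obtain i where e: "sym_cls \<tau> (Y j) = {Y i}" by blast
      then have "Y j = Y i" using mem by simp
      then show ?thesis using e by simp
    next
      case False
      then have "\<forall>t\<in>sym_cls \<tau> (Y j). \<exists>i. t = X i" using cl[of "Y j"] by blast
      then obtain i where "Y j = X i" using mem by blast
      then show ?thesis by simp
    qed
  qed
  show ne: "\<And>i j. rk \<tau> (X i) \<noteq> rk \<tau> (Y j)"
  proof
    fix i j assume a: "rk \<tau> (X i) = rk \<tau> (Y j)"
    have "\<tau> (Y j) (X i) \<and> \<tau> (X i) (Y j)" using eqv[of "X i" "Y j"] a by blast
    then have "X i \<in> sym_cls \<tau> (Y j)" by (simp add: sym_cls_def)
    then show False using clY[of j] by simp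
  qed
  show "\<And>i. infinite {k. rk \<tau> (X k) = rk \<tau> (X i)}"
  proof
    fix i assume fin: "finite {k. rk \<tau> (X k) = rk \<tau> (X i)}"
    have "sym_cls \<tau> (X i) \<subseteq> X ` {k. rk \<tau> (X k) = rk \<tau> (X i)}"
    proof
      fix t assume t: "t \<in> sym_cls \<tau> (X i)"
      have "\<not> (\<exists>j. sym_cls \<tau> (X i) = {Y j})"
      proof
        assume "\<exists>j. sym_cls \<tau> (X i) = {Y j}"
        then obtain j where "sym_cls \<tau> (X i) = {Y j}" by blast
        moreover have "X i \<in> sym_cls \<tau> (X i)" using refl by (simp add: sym_cls_def)
        ultimately show False by simp
      qed
      then have "\<forall>t\<in>sym_cls \<tau> (X i). \<exists>k. t = X k" using cl[of "X i"] by blast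
      then obtain k where k: "t = X k" using t by blast
      have "\<tau> (X i) (X k) \<and> \<tau> (X k) (X i)" using t k by (simp add: sym_cls_def)
      then have "rk \<tau> (X k) = rk \<tau> (X i)" using eqv[of "X k" "X i"] by blast
      then show "t \<in> X ` {k. rk \<tau> (X k) = rk \<tau> (X i)}" using k by blast
    qed
    moreover have "\<not> (\<exists>j. sym_cls \<tau> (X i) = {Y j})"
    proof
      assume "\<exists>j. sym_cls \<tau> (X i) = {Y j}"
      then obtain j where "sym_cls \<tau> (X i) = {Y j}" by blast
      moreover have "X i \<in> sym_cls \<tau> (X i)" using refl by (simp add: sym_cls_def)
      ultimately show False by simp
    qed
    then have "infinite (sym_cls \<tau> (X i))" using cl[of "X i"] by blast
    moreover have "finite (X ` {k. rk \<tau> (X k) = rk \<tau> (X i)})" using fin by (rule finite_imageI)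
    ultimately show False using finite_subset by blast
  qed
  show "infinite (range (\<lambda>i. rk \<tau> (X i)))"
  proof
    assume fin: "finite (range (\<lambda>i. rk \<tau> (X i)))"
    define h where "h v = sym_cls \<tau> (X (SOME i. rk \<tau> (X i) = v))" for v
    have "\<And>i. h (rk \<tau> (X i)) = sym_cls \<tau> (X i)"
    proof -
      fix i
      let ?j = "SOME j. rk \<tau> (X j) = rk \<tau> (X i)"
      have "rk \<tau> (X ?j) = rk \<tau> (X i)" by (rule someI_ex) blast
      then have "\<tau> (X ?j) (X i) \<and> \<tau> (X i) (X ?j)" using eqv by blast
      then have "sym_cls \<tau> (X ?j) = sym_cls \<tau> (X i)"
        unfolding sym_cls_def using tr by blast
      then show "h (rk \<tau> (X i)) = sym_cls \<tau> (X i)" by (simp add: h_def)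
    qed
    then have "{sym_cls \<tau> (X i) | i. True} = h ` range (\<lambda>i. rk \<tau> (X i))"
      by (auto simp: image_image)
    then show False using fin infc by simp
  qed
qed




definition isY :: "(sym \<Rightarrow> sym \<Rightarrow> bool) \<Rightarrow> nat \<Rightarrow> bool" where
  "isY \<tau> r \<longleftrightarrow> (\<exists>j. rk \<tau> (Y j) = r)"

definition yj :: "(sym \<Rightarrow> sym \<Rightarrow> bool) \<Rightarrow> nat \<Rightarrow> nat" where
  "yj \<tau> r = (THE j. rk \<tau> (Y j) = r)"

definition Dm :: "(nat \<times> nat) set \<Rightarrow> nat set" where
  "Dm A = {x. sec A x \<noteq> {}}"

definition ch :: "(sym \<Rightarrow> sym \<Rightarrow> bool) \<Rightarrow> (nat \<times> nat) set \<Rightarrow> nat \<Rightarrow> nat list \<Rightarrow> nat" where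
  "ch \<tau> A r l = (if isY \<tau> r
      then (LEAST v. v \<in> sec A (l ! rk \<tau> (X (yj \<tau> r))) \<and> (\<forall>w\<in>set l. w < v))
      else (LEAST v. v \<in> Dm A \<and> (\<forall>w\<in>set l. w < v)))"

primrec LL :: "(sym \<Rightarrow> sym \<Rightarrow> bool) \<Rightarrow> (nat \<times> nat) set \<Rightarrow> nat \<Rightarrow> nat list" where
  "LL \<tau> A 0 = []"
| "LL \<tau> A (Suc r) = LL \<tau> A r @ [ch \<tau> A r (LL \<tau> A r)]"

definition VV :: "(sym \<Rightarrow> sym \<Rightarrow> bool) \<Rightarrow> (nat \<times> nat) set \<Rightarrow> nat \<Rightarrow> nat" where
  "VV \<tau> A r = ch \<tau> A r (LL \<tau> A r)"

lemma LL_len: "length (LL \<tau> A r) = r"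
  by (induction r) auto

lemma LL_nth: "k < r \<Longrightarrow> LL \<tau> A r ! k = VV \<tau> A k"
proof (induction r)
  case 0 then show ?case by simp
next
  case (Suc r)
  show ?case
  proof (cases "k < r")
    case True
    then have "LL \<tau> A (Suc r) ! k = LL \<tau> A r ! k" by (simp add: nth_append LL_len)
    then show ?thesis using Suc True by simp
  next
    case False
    then have "k = r" using Suc by simp
    then show ?thesis by (simp add: nth_append LL_len VV_def)
  qed
qed

lemma LL_set: "set (LL \<tau> A r) = VV \<tau> A ` {..<r}"
proof -
  have "set (LL \<tau> A r) = {LL \<tau> A r ! i | i. i < length (LL \<tau> A r)}" by (rule set_conv_nth)
  also have "\<dots> = {VV \<tau> A i | i. i < r}"
  proof (rule Collect_cong)
    fix x
    show "(\<exists>i. x = LL \<tau> A r ! i \<and> i < length (LL \<tau> A r)) \<longleftrightarrow> (\<exists>i. x = VV \<tau> A i \<and> i < r)"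
    proof
      assume "\<exists>i. x = LL \<tau> A r ! i \<and> i < length (LL \<tau> A r)"
      then obtain i where "x = LL \<tau> A r ! i" "i < r" by (auto simp: LL_len)
      then show "\<exists>i. x = VV \<tau> A i \<and> i < r" by (auto simp: LL_nth)
    next
      assume "\<exists>i. x = VV \<tau> A i \<and> i < r"
      then obtain i where "x = VV \<tau> A i" "i < r" by blast
      then have "x = LL \<tau> A r ! i" by (simp add: LL_nth)
      then show "\<exists>i. x = LL \<tau> A r ! i \<and> i < length (LL \<tau> A r)" using \<open>i < r\<close> by (auto simp: LL_len)
    qed
  qed
  also have "\<dots> = VV \<tau> A ` {..<r}" by auto
  finally show ?thesis .
qed

lemma exists_above:
  fixes F S :: "nat set"
  assumes "finite F" "infinite S"
  shows "\<exists>v. v \<in> S \<and> (\<forall>w\<in>F. w < v)"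
proof -
  let ?m = "Max (insert 0 F)"
  obtain v where v: "?m < v" "v \<in> S" using assms(2) infinite_nat_iff_unbounded by blast
  have "\<forall>w\<in>F. w < v"
  proof
    fix w assume "w \<in> F"
    then have "w \<le> ?m" using assms(1) by simp
    then show "w < v" using v(1) by simp
  qed
  then show ?thesis using v(2) by blast
qed

lemma Dm_props:
  assumes P: "in_PP A"
  shows "infinite (Dm A)" and "\<And>x. x \<in> Dm A \<Longrightarrow> infinite (sec A x)"
proof -
  note Pd = P[unfolded in_PP_def]
  have i1: "infinite {x. infinite (sec A x)}" using Pd by (rule conjunct1)
  have i2: "\<And>x. sec A x \<noteq> {} \<Longrightarrow> infinite (sec A x)"
    using Pd[THEN conjunct2, THEN conjunct1] by blast
  have "{x. infinite (sec A x)} \<subseteq> Dm A" by (auto simp: Dm_def)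
  then show "infinite (Dm A)" using i1 finite_subset by blast
  show "\<And>x. x \<in> Dm A \<Longrightarrow> infinite (sec A x)" using i2 by (simp add: Dm_def)
qed

lemma yj_eq:
  assumes om: "omega_type \<tau>"
  shows "yj \<tau> (rk \<tau> (Y j)) = j"
  unfolding yj_def
proof (rule the_equality)
  show "rk \<tau> (Y j) = rk \<tau> (Y j)" by simp
  fix j' assume e: "rk \<tau> (Y j') = rk \<tau> (Y j)"
  show "j' = j"
  proof (rule ccontr)
    assume "j' \<noteq> j"
    then have "j' < j \<or> j < j'" by arith
    then show False using omega_facts(1)[OF om, of j' j] omega_facts(1)[OF om, of j j'] e by auto
  qed
qed

lemma VV_D:
  assumes om: "omega_type \<tau>" and P: "in_PP A" and n: "\<not> isY \<tau> r"
  shows "VV \<tau> A r \<in> Dm A \<and> (\<forall>k<r. VV \<tau> A k < VV \<tau> A r)"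
proof -
  have ex: "\<exists>v. v \<in> Dm A \<and> (\<forall>w\<in>set (LL \<tau> A r). w < v)"
    using exists_above[OF finite_set Dm_props(1)[OF P]] by blast
  have "VV \<tau> A r = (LEAST v. v \<in> Dm A \<and> (\<forall>w\<in>set (LL \<tau> A r). w < v))"
    using n by (simp add: VV_def ch_def)
  then have "VV \<tau> A r \<in> Dm A \<and> (\<forall>w\<in>set (LL \<tau> A r). w < VV \<tau> A r)"
    using LeastI_ex[OF ex] by simp
  then show ?thesis by (simp add: LL_set)
qed

lemma VV_Y:
  assumes om: "omega_type \<tau>" and P: "in_PP A"
  shows "VV \<tau> A (rk \<tau> (Y j)) \<in> sec A (VV \<tau> A (rk \<tau> (X j))) \<and>
         (\<forall>k<rk \<tau> (Y j). VV \<tau> A k < VV \<tau> A (rk \<tau> (Y j)))"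
proof -
  let ?r = "rk \<tau> (Y j)" and ?k = "rk \<tau> (X j)"
  have y: "isY \<tau> ?r" by (auto simp: isY_def)
  have yr: "yj \<tau> ?r = j" by (rule yj_eq[OF om])
  have kr: "?k < ?r" by (rule omega_facts(2)[OF om])
  have nk: "\<not> isY \<tau> ?k" using omega_facts(3)[OF om] by (metis isY_def)
  have "VV \<tau> A ?k \<in> Dm A" using VV_D[OF om P nk] by blast
  then have inf: "infinite (sec A (VV \<tau> A ?k))" by (rule Dm_props(2)[OF P])
  have nth: "LL \<tau> A ?r ! ?k = VV \<tau> A ?k" using kr by (rule LL_nth)
  have ex: "\<exists>v. v \<in> sec A (VV \<tau> A ?k) \<and> (\<forall>w\<in>set (LL \<tau> A ?r). w < v)"
    using exists_above[OF finite_set inf] by blast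
  have "VV \<tau> A ?r = (LEAST v. v \<in> sec A (VV \<tau> A ?k) \<and> (\<forall>w\<in>set (LL \<tau> A ?r). w < v))"
    using y yr nth by (simp add: VV_def ch_def)
  then have "VV \<tau> A ?r \<in> sec A (VV \<tau> A ?k) \<and> (\<forall>w\<in>set (LL \<tau> A ?r). w < VV \<tau> A ?r)"
    using LeastI_ex[OF ex] by simp
  then show ?thesis by (simp add: LL_set)
qed

lemma VV_mono:
  assumes om: "omega_type \<tau>" and P: "in_PP A"
  shows "strict_mono (VV \<tau> A)"
proof (rule strict_monoI)
  fix k r :: nat assume kr: "k < r"
  show "VV \<tau> A k < VV \<tau> A r"
  proof (cases "isY \<tau> r")
    case True
    then obtain j where r: "r = rk \<tau> (Y j)" by (auto simp: isY_def)
    show ?thesis using VV_Y[OF om P, of j] kr r by simp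
  next
    case False
    show ?thesis using VV_D[OF om P False] kr by simp
  qed
qed

lemma density:
  assumes om: "omega_type \<tau>" and P: "in_PP A"
  shows "\<exists>B. B \<subseteq> A \<and> B \<in> PP_type \<tau>"
proof -
  define V where "V = VV \<tau> A"
  define a' where "a' i = V (rk \<tau> (X i))" for i
  define b' where "b' i = V (rk \<tau> (Y i))" for i
  have sm: "strict_mono V" using VV_mono[OF om P] by (simp add: V_def)
  have injV: "inj V" using sm strict_mono_imp_inj_on by blast
  have g: "good a' b'"
    unfolding good_def
  proof (intro conjI allI)
    show "strict_mono b'"
    proof (rule strict_monoI)
      fix i j :: nat assume "i < j"
      then have "rk \<tau> (Y i) < rk \<tau> (Y j)" by (rule omega_facts(1)[OF om])
      then show "b' i < b' j" using sm by (simp add: b'_def strict_mono_less)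
    qed
  next
    fix i
    have "rk \<tau> (X i) < rk \<tau> (Y i)" by (rule omega_facts(2)[OF om])
    then show "a' i < b' i" using sm by (simp add: a'_def b'_def strict_mono_less)
  next
    fix i j
    have "rk \<tau> (X i) \<noteq> rk \<tau> (Y j)" by (rule omega_facts(3)[OF om])
    then show "a' i \<noteq> b' j" using injV by (simp add: a'_def b'_def inj_eq)
  next
    fix i
    have "{k. a' k = a' i} = {k. rk \<tau> (X k) = rk \<tau> (X i)}"
      using injV by (simp add: a'_def inj_eq)
    then show "infinite {k. a' k = a' i}" using omega_facts(4)[OF om, of i] by simp
  next
    have "range a' = V ` range (\<lambda>i. rk \<tau> (X i))" by (auto simp: a'_def)
    moreover have "infinite (V ` range (\<lambda>i. rk \<tau> (X i)))"
      using omega_facts(5)[OF om] injV finite_imageD inj_on_subset subset_UNIV by metis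
    ultimately show "infinite (range a')" by simp
  qed
  define B where "B = pairsOf a' b'"
  have G: "in_PP B \<and> bseq B = b' \<and> aseq B = a'" using G1[OF g] by (simp add: B_def)
  have sub: "B \<subseteq> A"
  proof
    fix p assume "p \<in> B"
    then obtain i where p: "p = (a' i, b' i)" by (auto simp: B_def pairsOf_def)
    have "b' i \<in> sec A (a' i)" using VV_Y[OF om P, of i] by (simp add: a'_def b'_def V_def)
    then show "p \<in> A" using p by (simp add: sec_def)
  qed
  have sv: "\<And>s. sym_val B s = V (rk \<tau> s)"
  proof -
    fix s show "sym_val B s = V (rk \<tau> s)"
      using G by (cases s) (simp_all add: a'_def b'_def)
  qed
  have "realizes B \<tau>"
    unfolding realizes_def
  proof (intro allI)
    fix s t
    have "\<tau> s t \<longleftrightarrow> rk \<tau> s \<le> rk \<tau> t" by (rule rk_le[OF om])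
    also have "\<dots> \<longleftrightarrow> V (rk \<tau> s) \<le> V (rk \<tau> t)" using sm by (simp add: strict_mono_less_eq)
    finally show "\<tau> s t \<longleftrightarrow> sym_val B s \<le> sym_val B t" by (simp add: sv)
  qed
  then have "B \<in> PP_type \<tau>" using G by (simp add: PP_type_def PP_def)
  then show ?thesis using sub by blast
qed




lemma atom_open: "open {f :: nat \<times> nat \<Rightarrow> bool. f p}"
proof -
  have "{f :: nat \<times> nat \<Rightarrow> bool. f p} = (\<lambda>f. f p) -` {True}" by auto
  moreover have "open ((\<lambda>f :: nat \<times> nat \<Rightarrow> bool. f p) -` {True})"
    by (rule open_vimage) (simp_all add: open_discrete)
  ultimately show ?thesis by simp
qed

lemma pred_atom[measurable]: "Measurable.pred borel (\<lambda>f :: nat \<times> nat \<Rightarrow> bool. f p)"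
  unfolding pred_def using atom_open[of p] by (simp add: borel_open)

definition PPf :: "(nat \<times> nat \<Rightarrow> bool) \<Rightarrow> bool" where
  "PPf f \<longleftrightarrow> (\<forall>n. \<exists>x\<ge>n. \<forall>m. \<exists>y\<ge>m. f (x, y)) \<and>
     (\<forall>x. (\<exists>y. f (x, y)) \<longrightarrow> (\<forall>m. \<exists>y\<ge>m. f (x, y))) \<and>
     (\<forall>x x'. x \<noteq> x' \<longrightarrow> \<not> (\<exists>y. f (x, y) \<and> f (x', y))) \<and>
     (\<forall>x y. f (x, y) \<longrightarrow> x < y) \<and>
     (\<forall>x y x' y'. f (x, y) \<longrightarrow> f (x', y') \<longrightarrow> x \<noteq> y')"

definition BQ :: "(nat \<times> nat \<Rightarrow> bool) \<Rightarrow> nat \<Rightarrow> nat \<Rightarrow> bool" where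
  "BQ f i v \<longleftrightarrow> (\<exists>x. f (x, v)) \<and>
     (\<exists>ws::nat list. distinct ws \<and> length ws = i \<and> (\<forall>w. w \<in> set ws \<longleftrightarrow> w < v \<and> (\<exists>x. f (x, w))))"

definition AQ :: "(nat \<times> nat \<Rightarrow> bool) \<Rightarrow> nat \<Rightarrow> nat \<Rightarrow> bool" where
  "AQ f i u \<longleftrightarrow> (\<exists>v. BQ f i v \<and> f (u, v))"

definition RF :: "(sym \<Rightarrow> sym \<Rightarrow> bool) \<Rightarrow> (nat \<times> nat \<Rightarrow> bool) \<Rightarrow> bool" where
  "RF \<tau> f \<longleftrightarrow> (\<forall>i j.
     (\<tau> (X i) (X j) \<longleftrightarrow> (\<exists>u u'. AQ f i u \<and> AQ f j u' \<and> u \<le> u')) \<and>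
     (\<tau> (X i) (Y j) \<longleftrightarrow> (\<exists>u u'. AQ f i u \<and> BQ f j u' \<and> u \<le> u')) \<and>
     (\<tau> (Y i) (X j) \<longleftrightarrow> (\<exists>u u'. BQ f i u \<and> AQ f j u' \<and> u \<le> u')) \<and>
     (\<tau> (Y i) (Y j) \<longleftrightarrow> (\<exists>u u'. BQ f i u \<and> BQ f j u' \<and> u \<le> u')))"

lemma pred_Phi: "Measurable.pred borel (\<lambda>f. PPf f \<and> RF \<tau> f)"
  unfolding PPf_def RF_def AQ_def BQ_def by measurable

lemma inf_iff: "infinite (S :: nat set) \<longleftrightarrow> (\<forall>n. \<exists>x\<ge>n. x \<in> S)"
  using infinite_nat_iff_unbounded_le by auto

lemma PPf_iff: "in_PP A \<longleftrightarrow> PPf (\<lambda>p. p \<in> A)"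
proof -
  have 1: "infinite {x. infinite (sec A x)} \<longleftrightarrow> (\<forall>n. \<exists>x\<ge>n. \<forall>m. \<exists>y\<ge>m. (x, y) \<in> A)"
    by (simp add: inf_iff sec_def)
  have 2: "(\<forall>x. sec A x \<noteq> {} \<longrightarrow> infinite (sec A x)) \<longleftrightarrow>
           (\<forall>x. (\<exists>y. (x, y) \<in> A) \<longrightarrow> (\<forall>m. \<exists>y\<ge>m. (x, y) \<in> A))"
    by (simp add: inf_iff sec_def)
  have 3: "(\<forall>x x'. x \<noteq> x' \<longrightarrow> sec A x \<inter> sec A x' = {}) \<longleftrightarrow>
           (\<forall>x x'. x \<noteq> x' \<longrightarrow> \<not> (\<exists>y. (x, y) \<in> A \<and> (x', y) \<in> A))"
    by (simp add: sec_def disjoint_iff)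
  show ?thesis unfolding in_PP_def PPf_def using 1 2 3 by simp
qed

lemma enum_below:
  fixes S :: "nat set"
  assumes S: "infinite S"
  shows "{w \<in> S. w < enumerate S n} = enumerate S ` {..<n}"
proof
  show "enumerate S ` {..<n} \<subseteq> {w \<in> S. w < enumerate S n}"
  proof
    fix w assume "w \<in> enumerate S ` {..<n}"
    then obtain k where k: "k < n" "w = enumerate S k" by blast
    have "enumerate S k \<in> S" using S by (rule enumerate_in_set)
    moreover have "enumerate S k < enumerate S n" using k(1) S by (rule enumerate_mono)
    ultimately show "w \<in> {w \<in> S. w < enumerate S n}" using k(2) by simp
  qed
  show "{w \<in> S. w < enumerate S n} \<subseteq> enumerate S ` {..<n}"
  proof
    fix w assume w: "w \<in> {w \<in> S. w < enumerate S n}"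
    then obtain k where k: "enumerate S k = w" using enumerate_Ex[OF S] by blast
    have "enumerate S k < enumerate S n" using w k by simp
    then have "k < n" using enumerate_mono_iff[OF S] by simp
    then show "w \<in> enumerate S ` {..<n}" using k by blast
  qed
qed

lemma enum_iff:
  fixes S :: "nat set"
  assumes S: "infinite S"
  shows "enumerate S i = v \<longleftrightarrow> v \<in> S \<and> card {w \<in> S. w < v} = i"
proof
  have c: "\<And>n. card {w \<in> S. w < enumerate S n} = n"
  proof -
    fix n
    have "card (enumerate S ` {..<n}) = n"
      using inj_enumerate[OF S] by (simp add: card_image inj_on_subset)
    then show "card {w \<in> S. w < enumerate S n} = n" using enum_below[OF S] by simp
  qed
  show "enumerate S i = v \<Longrightarrow> v \<in> S \<and> card {w \<in> S. w < v} = i"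
  proof -
    assume e: "enumerate S i = v"
    have "enumerate S i \<in> S" using S by (rule enumerate_in_set)
    then show "v \<in> S \<and> card {w \<in> S. w < v} = i" using c[of i] e by simp
  qed
  assume v: "v \<in> S \<and> card {w \<in> S. w < v} = i"
  then obtain k where k: "enumerate S k = v" using enumerate_Ex[OF S] by blast
  then have "k = i" using c[of k] v by simp
  then show "enumerate S i = v" using k by simp
qed

lemma card_list_iff:
  assumes "finite T"
  shows "card T = i \<longleftrightarrow> (\<exists>ws::nat list. distinct ws \<and> length ws = i \<and> set ws = T)"
proof
  assume "card T = i"
  obtain ws where "set ws = T" "distinct ws" using finite_distinct_list[OF assms] by blast
  then show "\<exists>ws::nat list. distinct ws \<and> length ws = i \<and> set ws = T"
  proof -
    have "length ws = i" using \<open>card T = i\<close> \<open>set ws = T\<close> \<open>distinct ws\<close> distinct_card by metis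
    then show ?thesis using \<open>set ws = T\<close> \<open>distinct ws\<close> by blast
  qed
next
  assume "\<exists>ws::nat list. distinct ws \<and> length ws = i \<and> set ws = T"
  then obtain ws :: "nat list" where "distinct ws" "length ws = i" "set ws = T" by blast
  then show "card T = i" using distinct_card by metis
qed

lemma BQ_iff:
  assumes P: "in_PP A"
  shows "BQ (\<lambda>p. p \<in> A) i v \<longleftrightarrow> bseq A i = v"
proof -
  let ?S = "snd ` A"
  have mem: "\<And>w. w \<in> ?S \<longleftrightarrow> (\<exists>x. (x, w) \<in> A)" by force
  have "range (bseq A) = range (bseq A)" ..
  have gA: "good (aseq A) (bseq A) \<and> A = pairsOf (aseq A) (bseq A)" by (rule G2[OF P])
  have "?S = range (bseq A)"
  proof -
    have "?S = snd ` pairsOf (aseq A) (bseq A)" using gA by simp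
    also have "\<dots> = range (bseq A)" by (auto simp: pairsOf_def image_image)
    finally show ?thesis .
  qed
  moreover have "infinite (range (bseq A))"
  proof -
    have "strict_mono (bseq A)" using gA by (simp add: good_def)
    then have "inj (bseq A)" using strict_mono_imp_inj_on by blast
    then show ?thesis using finite_imageD infinite_UNIV_nat by blast
  qed
  ultimately have S: "infinite ?S" by simp
  have e: "bseq A i = v \<longleftrightarrow> v \<in> ?S \<and> card {w \<in> ?S. w < v} = i"
    unfolding bseq_def by (rule enum_iff[OF S])
  have fin: "finite {w \<in> ?S. w < v}" by simp
  have T: "{w \<in> ?S. w < v} = {w. w < v \<and> (\<exists>x. (x, w) \<in> A)}" using mem by blast
  have e1: "card {w \<in> ?S. w < v} = i \<longleftrightarrow>
      (\<exists>ws::nat list. distinct ws \<and> length ws = i \<and> set ws = {w. w < v \<and> (\<exists>x. (x, w) \<in> A)})"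
    using card_list_iff[OF fin, of i] unfolding T .
  have e2: "card {w \<in> ?S. w < v} = i \<longleftrightarrow>
      (\<exists>ws::nat list. distinct ws \<and> length ws = i \<and> (\<forall>w. w \<in> set ws \<longleftrightarrow> w < v \<and> (\<exists>x. (x, w) \<in> A)))"
    unfolding e1 by (simp add: set_eq_iff)
  show ?thesis unfolding BQ_def e e2 using mem by simp
qed

lemma AQ_iff:
  assumes P: "in_PP A"
  shows "AQ (\<lambda>p. p \<in> A) i u \<longleftrightarrow> aseq A i = u"
proof -
  have gA: "good (aseq A) (bseq A) \<and> A = pairsOf (aseq A) (bseq A)" by (rule G2[OF P])
  then have inj: "inj (bseq A)" using strict_mono_imp_inj_on by (auto simp: good_def)
  have "AQ (\<lambda>p. p \<in> A) i u \<longleftrightarrow> (u, bseq A i) \<in> A" by (simp add: AQ_def BQ_iff[OF P])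
  also have "\<dots> \<longleftrightarrow> aseq A i = u"
  proof
    assume "(u, bseq A i) \<in> A"
    then have "(u, bseq A i) \<in> pairsOf (aseq A) (bseq A)" using gA by simp
    then obtain k where "u = aseq A k" "bseq A i = bseq A k" by (auto simp: pairsOf_def)
    then show "aseq A i = u" using inj by (metis injD)
  next
    assume "aseq A i = u"
    have "(aseq A i, bseq A i) \<in> pairsOf (aseq A) (bseq A)" by (auto simp: pairsOf_def)
    then show "(u, bseq A i) \<in> A" using gA \<open>aseq A i = u\<close> by simp
  qed
  finally show ?thesis .
qed

lemma all_sym: "(\<forall>s. P s) \<longleftrightarrow> (\<forall>i. P (X i)) \<and> (\<forall>j. P (Y j))"
  by (metis sym.exhaust)

lemma all_sym2: "(\<forall>s t. Q s t) \<longleftrightarrow> (\<forall>i j. Q (X i) (X j) \<and> Q (X i) (Y j) \<and> Q (Y i) (X j) \<and> Q (Y i) (Y j))"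
proof
  assume "\<forall>i j. Q (X i) (X j) \<and> Q (X i) (Y j) \<and> Q (Y i) (X j) \<and> Q (Y i) (Y j)"
  then show "\<forall>s t. Q s t"
  proof (intro allI)
    fix s t
    assume H: "\<forall>i j. Q (X i) (X j) \<and> Q (X i) (Y j) \<and> Q (Y i) (X j) \<and> Q (Y i) (Y j)"
    show "Q s t" using H by (cases s; cases t) auto
  qed
qed simp

fun VQ :: "(nat \<times> nat \<Rightarrow> bool) \<Rightarrow> sym \<Rightarrow> nat \<Rightarrow> bool" where
  "VQ f (X i) u = AQ f i u" | "VQ f (Y j) u = BQ f j u"

lemma VQ_iff:
  assumes P: "in_PP A"
  shows "VQ (\<lambda>p. p \<in> A) s u \<longleftrightarrow> sym_val A s = u"
  by (cases s) (simp_all add: AQ_iff[OF P] BQ_iff[OF P])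

lemma RF_iff:
  assumes P: "in_PP A"
  shows "realizes A \<tau> \<longleftrightarrow> RF \<tau> (\<lambda>p. p \<in> A)"
proof -
  let ?f = "\<lambda>p. p \<in> A"
  have 1: "\<And>s t. sym_val A s \<le> sym_val A t \<longleftrightarrow> (\<exists>u u'. VQ ?f s u \<and> VQ ?f t u' \<and> u \<le> u')"
    by (simp add: VQ_iff[OF P])
  have "realizes A \<tau> \<longleftrightarrow> (\<forall>s t. \<tau> s t \<longleftrightarrow> (\<exists>u u'. VQ ?f s u \<and> VQ ?f t u' \<and> u \<le> u'))"
    unfolding realizes_def 1 ..
  also have "\<dots> \<longleftrightarrow> RF \<tau> ?f"
    unfolding all_sym2[where Q = "\<lambda>s t. \<tau> s t \<longleftrightarrow> (\<exists>u u'. VQ ?f s u \<and> VQ ?f t u' \<and> u \<le> u')"]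
    unfolding RF_def VQ.simps ..
  finally show ?thesis .
qed

lemma PP_type_iff: "A \<in> PP_type \<tau> \<longleftrightarrow> PPf (\<lambda>p. p \<in> A) \<and> RF \<tau> (\<lambda>p. p \<in> A)"
proof (cases "in_PP A")
  case True then show ?thesis
    using PPf_iff RF_iff[OF True] by (simp add: PP_type_def PP_def)
next
  case False then show ?thesis using PPf_iff by (simp add: PP_type_def PP_def)
qed

lemma borel_part: "is_Borel_family (PP_type \<tau>)"
proof -
  have "char_fun ` PP_type \<tau> = {f. PPf f \<and> RF \<tau> f}"
  proof
    show "char_fun ` PP_type \<tau> \<subseteq> {f. PPf f \<and> RF \<tau> f}"
      using PP_type_iff by (auto simp: char_fun_def)
    show "{f. PPf f \<and> RF \<tau> f} \<subseteq> char_fun ` PP_type \<tau>"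
    proof
      fix f assume f: "f \<in> {f. PPf f \<and> RF \<tau> f}"
      have "f = char_fun {p. f p}" by (simp add: char_fun_def)
      moreover have "{p. f p} \<in> PP_type \<tau>" using f PP_type_iff[of "{p. f p}" \<tau>] by simp
      ultimately show "f \<in> char_fun ` PP_type \<tau>" by blast
    qed
  qed
  moreover have "{f \<in> space borel. PPf f \<and> RF \<tau> f} \<in> sets borel"
    using pred_Phi[of \<tau>] unfolding pred_def .
  ultimately show ?thesis unfolding is_Borel_family_def by simp
qed




fun enc :: "sym \<Rightarrow> nat" where "enc (X i) = 2 * i" | "enc (Y i) = 2 * i + 1"

lemma two_ne: "(2::nat) * a \<noteq> Suc (2 * b)" by presburger

lemma enc_inj: "enc s = enc t \<Longrightarrow> s = t"
proof (cases s; cases t)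
  fix i j assume "enc s = enc t" "s = X i" "t = X j" then show "s = t" by simp
next
  fix i j assume "enc s = enc t" "s = X i" "t = Y j" then show "s = t" using two_ne[of i j] by simp
next
  fix i j assume "enc s = enc t" "s = Y i" "t = X j" then show "s = t" using two_ne[of j i] by simp
next
  fix i j assume "enc s = enc t" "s = Y i" "t = Y j" then show "s = t" by simp
qed

lemma upper: "{PP_type \<tau> | \<tau>. omega_type \<tau>} \<lesssim> (UNIV :: nat set set)"
proof -
  have "{PP_type \<tau> | \<tau>. omega_type \<tau>} = PP_type ` {\<tau>. omega_type \<tau>}" by blast
  then have 1: "{PP_type \<tau> | \<tau>. omega_type \<tau>} \<lesssim> {\<tau>. omega_type \<tau>}"
    by (simp only: image_lepoll)
  define g where "g \<tau> = {prod_encode (enc s, enc t) | s t. \<tau> s t}" for \<tau> :: "sym \<Rightarrow> sym \<Rightarrow> bool"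
  have mem: "\<And>\<tau> s t. prod_encode (enc s, enc t) \<in> g \<tau> \<longleftrightarrow> \<tau> s t"
  proof -
    fix \<tau> :: "sym \<Rightarrow> sym \<Rightarrow> bool" and s t
    show "prod_encode (enc s, enc t) \<in> g \<tau> \<longleftrightarrow> \<tau> s t"
    proof
      assume "prod_encode (enc s, enc t) \<in> g \<tau>"
      then obtain s' t' where e: "prod_encode (enc s, enc t) = prod_encode (enc s', enc t')" and "\<tau> s' t'"
        unfolding g_def by blast
      from e have "enc s = enc s'" "enc t = enc t'" using prod_encode_eq by auto
      then have "s = s'" "t = t'" using enc_inj by auto
      then show "\<tau> s t" using \<open>\<tau> s' t'\<close> by simp
    qed (auto simp: g_def)
  qed
  have "inj g"
  proof (rule injI)
    fix \<tau> \<tau>' assume eq: "g \<tau> = g \<tau>'"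
    have "\<And>s t. \<tau> s t \<longleftrightarrow> \<tau>' s t"
    proof -
      fix s t
      have "\<tau> s t \<longleftrightarrow> prod_encode (enc s, enc t) \<in> g \<tau>" by (rule mem[symmetric])
      also have "\<dots> \<longleftrightarrow> prod_encode (enc s, enc t) \<in> g \<tau>'" unfolding eq ..
      also have "\<dots> \<longleftrightarrow> \<tau>' s t" by (rule mem)
      finally show "\<tau> s t \<longleftrightarrow> \<tau>' s t" .
    qed
    then show "\<tau> = \<tau>'" by (intro ext) simp
  qed
  have 2: "{\<tau>. omega_type \<tau>} \<lesssim> (UNIV :: nat set set)"
    unfolding lepoll_def
  proof (rule exI[of _ g], rule conjI)
    show "inj_on g {\<tau>. omega_type \<tau>}" using \<open>inj g\<close> by (rule inj_on_subset) simp
  qed simp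
  show ?thesis using 1 2 by (rule lepoll_trans)
qed

definition aS :: "nat set \<Rightarrow> nat \<Rightarrow> nat" where
  "aS S i = (if odd i then 2 * fst (prod_decode (i div 2)) + 4
            else if i mod 4 = 2 then (if i div 4 \<in> S then 0 else 2)
            else if i mod 8 = 0 then 0 else 2)"

definition bS :: "nat \<Rightarrow> nat" where "bS i = 2 * i + 3"

lemma aS_vals: "aS S i = 0 \<or> aS S i = 2 \<or> (\<exists>x. aS S i = 2 * x + 4)"
  by (auto simp: aS_def)

lemma aS_8m: "aS S (8 * m) = 0"
  by (simp add: aS_def)

lemma aS_8m4: "aS S (8 * m + 4) = 2"
proof -
  have "(8 * m + 4) mod 4 = (0::nat)" by presburger
  moreover have "(8 * m + 4) mod 8 = (4::nat)" by presburger
  ultimately show ?thesis by (simp add: aS_def)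
qed

lemma aS_odd: "aS S (2 * prod_encode (x, n) + 1) = 2 * x + 4"
  by (simp add: aS_def)

lemma aS_4m2: "aS S (4 * m + 2) = (if m \<in> S then 0 else 2)"
proof -
  have "(4 * m + 2) mod 4 = (2::nat)" by presburger
  moreover have "(4 * m + 2) div 4 = m" by presburger
  moreover have "even (4 * m + 2)" by presburger
  ultimately show ?thesis by (simp add: aS_def)
qed

lemma inj_lin: "inj (\<lambda>m::nat. c * m + d) \<longleftrightarrow> c \<noteq> 0"
  by (auto simp: inj_on_def)

lemma good_aS: "good (aS S) bS"
  unfolding good_def
proof (intro conjI allI)
  show "strict_mono bS" by (auto simp: strict_mono_def bS_def)
next
  fix i
  show "aS S i < bS i"
  proof (cases "odd i")
    case True
    have "fst (prod_decode (i div 2)) \<le> i div 2"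
      by (metis le_prod_encode_1 prod.collapse prod_decode_inverse)
    moreover have "i = 2 * (i div 2) + 1" using True by presburger
    ultimately have "2 * fst (prod_decode (i div 2)) + 4 < 2 * i + 3" by linarith
    then show ?thesis using True by (simp add: aS_def bS_def)
  next
    case False then show ?thesis by (simp add: aS_def bS_def)
  qed
next
  fix i j show "aS S i \<noteq> bS j"
  proof -
    have "even (aS S i)" by (auto simp: aS_def)
    moreover have "odd (bS j)" by (simp add: bS_def)
    ultimately show ?thesis by auto
  qed
next
  fix i
  have key: "\<And>v. v = 0 \<or> v = 2 \<or> (\<exists>x. v = 2 * x + 4) \<Longrightarrow> infinite {k. aS S k = v}"
  proof -
    fix v :: nat assume v: "v = 0 \<or> v = 2 \<or> (\<exists>x. v = 2 * x + 4)"
    show "infinite {k. aS S k = v}"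
    proof -
      obtain h :: "nat \<Rightarrow> nat" where h: "inj h" "\<And>m. aS S (h m) = v"
      proof -
        consider "v = 0" | "v = 2" | x where "v = 2 * x + 4" using v by blast
        then show ?thesis
        proof cases
          case 1
          have "inj (\<lambda>m::nat. 8 * m)" by (auto simp: inj_on_def)
          then show ?thesis using that[of "\<lambda>m. 8 * m"] aS_8m 1 by simp
        next
          case 2
          have "inj (\<lambda>m::nat. 8 * m + 4)" by (simp add: inj_lin)
          then show ?thesis using that[of "\<lambda>m. 8 * m + 4"] aS_8m4 2 by simp
        next
          case 3
          have "inj (\<lambda>n. 2 * prod_encode (x, n) + 1)"
            by (auto simp: inj_on_def prod_encode_eq)
          then show ?thesis using that[of "\<lambda>n. 2 * prod_encode (x, n) + 1"] aS_odd 3 by simp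
        qed
      qed
      have "range h \<subseteq> {k. aS S k = v}" using h(2) by auto
      moreover have "infinite (range h)" using h(1) by (rule range_inj_infinite)
      ultimately show ?thesis by (rule infinite_super)
    qed
  qed
  show "infinite {k. aS S k = aS S i}" using key aS_vals by blast
next
  have "range (\<lambda>x::nat. 2 * x + 4) \<subseteq> range (aS S)"
  proof
    fix v assume "v \<in> range (\<lambda>x::nat. 2 * x + 4)"
    then obtain x where "v = 2 * x + 4" by blast
    have e: "aS S (2 * prod_encode (x, 0) + 1) = 2 * x + 4" by (rule aS_odd)
    show "v \<in> range (aS S)" unfolding \<open>v = 2 * x + 4\<close> e[symmetric] by (rule rangeI)
  qed
  moreover have "infinite (range (\<lambda>x::nat. 2 * x + 4))"
  proof (rule range_inj_infinite)
    show "inj (\<lambda>x::nat. 2 * x + 4)" using inj_lin[of 2 4] by simp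
  qed
  ultimately show "infinite (range (aS S))" by (rule infinite_super)
qed

definition AS :: "nat set \<Rightarrow> (nat \<times> nat) set" where "AS S = pairsOf (aS S) bS"

definition tS :: "nat set \<Rightarrow> sym \<Rightarrow> sym \<Rightarrow> bool" where
  "tS S = (\<lambda>s t. sym_val (AS S) s \<le> sym_val (AS S) t)"

lemma AS_props: "in_PP (AS S) \<and> aseq (AS S) = aS S"
proof -
  have "in_PP (pairsOf (aS S) bS) \<and> bseq (pairsOf (aS S) bS) = bS \<and> aseq (pairsOf (aS S) bS) = aS S"
    by (rule G1[OF good_aS])
  then show ?thesis unfolding AS_def by (elim conjE) (rule conjI)
qed

lemma tS_key: "(tS S (X 0) (X (4 * m + 2)) \<and> tS S (X (4 * m + 2)) (X 0)) \<longleftrightarrow> m \<in> S"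
proof -
  have z: "aS S 0 = 0" by (simp add: aS_def)
  have as: "aseq (AS S) = aS S" using AS_props[of S] by (rule conjunct2)
  have v: "\<And>i. sym_val (AS S) (X i) = aS S i" by (simp only: sym_val.simps as)
  have "(tS S (X 0) (X (4 * m + 2)) \<and> tS S (X (4 * m + 2)) (X 0)) \<longleftrightarrow>
        (aS S 0 \<le> aS S (4 * m + 2) \<and> aS S (4 * m + 2) \<le> aS S 0)"
    by (simp only: tS_def v)
  also have "\<dots> \<longleftrightarrow> m \<in> S" unfolding z aS_4m2 by simp
  finally show ?thesis .
qed

lemma lower: "(UNIV :: nat set set) \<lesssim> {PP_type \<tau> | \<tau>. omega_type \<tau>}"
proof -
  have te: "\<And>S. omega_type (tS S) \<and> realizes (AS S) (tS S)"
  proof -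
    fix S
    have "in_PP (AS S)" using AS_props[of S] by (rule conjunct1)
    then show "omega_type (tS S) \<and> realizes (AS S) (tS S)" unfolding tS_def by (rule type_exists)
  qed
  have om: "\<And>S. omega_type (tS S)" using te by (rule conjunct1)
  have inT: "\<And>S. AS S \<in> PP_type (tS S)"
  proof -
    fix S
    have "AS S \<in> PP" using AS_props[of S] by (simp add: PP_def)
    then show "AS S \<in> PP_type (tS S)" using te[of S] by (simp add: PP_type_def)
  qed
  have "inj (\<lambda>S. PP_type (tS S))"
  proof (rule injI)
    fix S T assume e: "PP_type (tS S) = PP_type (tS T)"
    have "AS S \<in> PP_type (tS T)" using inT[of S] unfolding e .
    then have "realizes (AS S) (tS T)" by (simp add: PP_type_def)
    then have "tS T = tS S" unfolding tS_def by (rule realizes_unique)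
    show "S = T"
    proof (rule set_eqI)
      fix m
      have "m \<in> S \<longleftrightarrow> (tS S (X 0) (X (4 * m + 2)) \<and> tS S (X (4 * m + 2)) (X 0))"
        by (rule tS_key[symmetric])
      also have "\<dots> \<longleftrightarrow> (tS T (X 0) (X (4 * m + 2)) \<and> tS T (X (4 * m + 2)) (X 0))"
        unfolding \<open>tS T = tS S\<close> ..
      also have "\<dots> \<longleftrightarrow> m \<in> T" by (rule tS_key)
      finally show "m \<in> S \<longleftrightarrow> m \<in> T" .
    qed
  qed
  moreover have "range (\<lambda>S. PP_type (tS S)) \<subseteq> {PP_type \<tau> | \<tau>. omega_type \<tau>}" using om by blast
  ultimately show ?thesis unfolding lepoll_def
    by (intro exI[of _ "\<lambda>S. PP_type (tS S)"] conjI)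
qed

lemma part3: "{PP_type \<tau> | \<tau>. omega_type \<tau>} \<approx> (UNIV :: real set)"
proof -
  have "{PP_type \<tau> | \<tau>. omega_type \<tau>} \<approx> (UNIV :: nat set set)"
    using upper lower by (rule lepoll_antisym)
  then show ?thesis using nat_sets_eqpoll_reals by (rule eqpoll_trans)
qed


theorem mainTheorem11:
  shows "(\<forall>\<tau>. omega_type \<tau> \<longrightarrow>
            is_Borel_family (PP_type \<tau>) \<and>
            (\<forall>A\<in>PP. \<exists>B. B \<subseteq> A \<and> B \<in> PP_type \<tau>)) \<and>
         (\<forall>A\<in>PP. \<exists>!\<tau>. omega_type \<tau> \<and> A \<in> PP_type \<tau>) \<and>
         {PP_type \<tau> | \<tau>. omega_type \<tau>} \<approx> (UNIV :: real set)"
proof (intro conjI allI impI)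
  fix \<tau> :: "sym \<Rightarrow> sym \<Rightarrow> bool" assume om: "omega_type \<tau>"
  show "is_Borel_family (PP_type \<tau>)" by (rule borel_part)
  show "\<forall>A\<in>PP. \<exists>B. B \<subseteq> A \<and> B \<in> PP_type \<tau>"
  proof
    fix A assume "A \<in> PP"
    then have "in_PP A" by (simp add: PP_def)
    then show "\<exists>B. B \<subseteq> A \<and> B \<in> PP_type \<tau>" by (rule density[OF om])
  qed
next
  show "\<forall>A\<in>PP. \<exists>!\<tau>. omega_type \<tau> \<and> A \<in> PP_type \<tau>" by (rule part2)
next
  show "{PP_type \<tau> | \<tau>. omega_type \<tau>} \<approx> (UNIV :: real set)" by (rule part3)
qed

end
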